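(* For $n\ge1$ let $\widehat x^n(t):=\sum_{m=0}^{n-1}\sum_{k=0}^{2^m-1}e_{m,k}(t)$, $t\in[0,1]$, let $J_n:=\frac13(2^n-(-1)^n)$ (the Jacobsthal numbers), and let $$M_n:=\frac13\Big(2+\sqrt2+(-1)^{n+1}2^{-n}(\sqrt2-1)\Big)-2^{-n/2}.$$ Then $\widehat x^n$ has exactly two maximal points on $[0,1]$, namely $t_n^-:=2^{-n}J_n\in[0,1/2]$ and $t_n^+:=1-t_n^-\in[1/2,1]$, and $$\max_{t\in[0,1]}\widehat x^n(t)=\widehat x^n(t_n^-)=\widehat x^n(t_n^+)=M_n.$$
   Context: The Faber--Schauder functions are $e_{0,0}(t):=(\min\{t,1-t\})^+$ and $e_{m,k}(t):=2^{-m/2}e_{0,0}(2^m t-k)$ for $t\in\mathbb R$, $m\ge1$, $k\in\mathbb Z$. *)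

theory Defs
  imports Complex_Main
begin

definition e00 :: "real \<Rightarrow> real" where
  "e00 t = max 0 (min t (1 - t))"

definition faber :: "nat \<Rightarrow> int \<Rightarrow> real \<Rightarrow> real" where
  "faber m k t = 2 powr (- real m / 2) * e00 (2 ^ m * t - real_of_int k)"

definition xhat :: "nat \<Rightarrow> real \<Rightarrow> real" where
  "xhat n t = (\<Sum>m<n. \<Sum>k<(2::nat) ^ m. faber m (int k) t)"

definition jacobsthal :: "nat \<Rightarrow> real" where
  "jacobsthal n = (2 ^ n - (-1) ^ n) / 3"

definition Mn :: "nat \<Rightarrow> real" where
  "Mn n = (2 + sqrt 2 + (-1) ^ (n + 1) * 2 powr (- real n) * (sqrt 2 - 1)) / 3
          - 2 powr (- real n / 2)"

definition t_minus :: "nat \<Rightarrow> real" where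
  "t_minus n = 2 powr (- real n) * jacobsthal n"

definition t_plus :: "nat \<Rightarrow> real" where
  "t_plus n = 1 - t_minus n"

end

theory Submission
  imports Defs
begin

lemma e00_sym: "e00 (1 - x) = e00 x"
  by (simp add: e00_def min.commute)

lemma e00_nonpos: "x \<le> 0 \<Longrightarrow> e00 x = 0"
  by (simp add: e00_def)

lemma e00_half: "0 \<le> x \<Longrightarrow> x \<le> 1/2 \<Longrightarrow> e00 x = x"
  by (simp add: e00_def)

definition D :: "nat \<Rightarrow> real \<Rightarrow> real" where
  "D m t = (\<Sum>k<(2::nat)^m. e00 (2^m * t - real k))"

lemma xhat_D: "xhat n t = (\<Sum>m<n. 2 powr (- real m / 2) * D m t)"
  unfolding xhat_def D_def faber_def by (simp add: sum_distrib_left)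

lemma D_sym: "D m (1 - t) = D m t"
proof -
  let ?N = "(2::nat)^m"
  have "D m t = (\<Sum>k<?N. e00 (2^m * t - real (?N - Suc k)))"
    unfolding D_def by (rule sum.nat_diff_reindex[symmetric])
  also have "\<dots> = (\<Sum>k<?N. e00 (2^m * (1 - t) - real k))"
  proof (rule sum.cong)
    fix k assume "k \<in> {..<?N}"
    then have k: "k < ?N" by simp
    have "real (?N - Suc k) = 2^m - 1 - real k" using k by (simp add: of_nat_diff)
    then have "2^m * t - real (?N - Suc k) = 1 - (2^m * (1 - t) - real k)"
      by (simp add: algebra_simps)
    then show "e00 (2^m * t - real (?N - Suc k)) = e00 (2^m * (1 - t) - real k)"
      by (simp add: e00_sym)
  qed simp
  finally show ?thesis unfolding D_def by simp
qed

lemma D_double: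
  assumes "0 \<le> t" "t \<le> 1/2"
  shows "D (Suc m) t = D m (2 * t)"
proof -
  let ?N = "(2::nat)^m"
  have "D (Suc m) t = (\<Sum>k<(2::nat)^Suc m. e00 (2^m * (2*t) - real k))"
    unfolding D_def by (simp add: mult.assoc mult.left_commute)
  also have "\<dots> = (\<Sum>k<?N. e00 (2^m * (2*t) - real k))"
  proof (rule sum.mono_neutral_right)
    show "\<forall>i\<in>{..<(2::nat)^Suc m} - {..<?N}. e00 (2^m * (2*t) - real i) = 0"
    proof
      fix i assume "i \<in> {..<(2::nat)^Suc m} - {..<?N}"
      then have "?N \<le> i" by simp
      then have "(2::real)^m \<le> real i"
        by (metis of_nat_le_iff of_nat_numeral of_nat_power)
      moreover have "(2::real)^m * (2*t) \<le> 2^m" using assms by simp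
      ultimately show "e00 (2^m * (2*t) - real i) = 0" by (intro e00_nonpos) linarith
    qed
  qed auto
  finally show ?thesis unfolding D_def .
qed

lemma xhat_sym: "xhat n (1 - t) = xhat n t"
  unfolding xhat_D by (simp add: D_sym)

definition a :: real where "a = 1 / sqrt 2"

lemma powr_half: "2 powr (- real m / 2) = a ^ m"
proof -
  have "(2::real) powr (- real m / 2) = (2 powr (-1/2)) powr real m"
    by (simp add: powr_powr)
  also have "\<dots> = (2 powr (-1/2)) ^ m" by (simp add: powr_realpow)
  also have "2 powr (-1/2::real) = a"
  proof -
    have "(2::real) powr (-1/2) = 2 powr (- (1/2))" by simp
    also have "\<dots> = 1 / 2 powr (1/2)" by (rule powr_minus_divide)
    also have "(2::real) powr (1/2) = sqrt 2" by (rule powr_half_sqrt) simp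
    finally show ?thesis unfolding a_def .
  qed
  finally show ?thesis .
qed

lemma xhat_rec:
  assumes "0 \<le> t" "t \<le> 1/2"
  shows "xhat (Suc n) t = t + a * xhat n (2 * t)"
proof -
  have "xhat (Suc n) t = a^0 * D 0 t + (\<Sum>m<n. a ^ Suc m * D (Suc m) t)"
    unfolding xhat_D powr_half by (rule sum.lessThan_Suc_shift)
  also have "D 0 t = t" unfolding D_def using assms by (simp add: e00_half)
  also have "(\<Sum>m<n. a ^ Suc m * D (Suc m) t) = a * (\<Sum>m<n. a ^ m * D m (2*t))"
    using assms by (simp add: D_double sum_distrib_left mult.assoc)
  finally show ?thesis unfolding xhat_D powr_half by simp
qed

lemma p2: "(2::real) powr (- real n) = 1 / 2^n"
  by (simp add: powr_minus_divide powr_realpow)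

lemma t_minus_eq: "t_minus n = 1 / 2^n * ((2^n - (-1)^n) / 3)"
  unfolding t_minus_def jacobsthal_def p2 ..

lemma Mn_eq: "Mn n = (2 + sqrt 2 + (-1) ^ (n + 1) * (1 / 2^n) * (sqrt 2 - 1)) / 3 - a ^ n"
  unfolding Mn_def p2 powr_half ..

lemma t_minus_1: "t_minus 1 = 1/2" by (simp add: t_minus_eq)
lemma Mn_1: "Mn 1 = 1/2"
proof -
  have "sqrt 2 * sqrt 2 = (2::real)" by simp
  then show ?thesis unfolding Mn_eq a_def by (simp add: field_simps)
qed

lemma alg1: fixes q e :: real assumes "q > 0"
  shows "1 / (2*q) * ((2*q - (-e)) / 3) = (1 - 1 / q * ((q - e) / 3)) / 2"
  using assms by (simp add: field_simps)

lemma t_minus_Suc: "t_minus (Suc n) = (1 - t_minus n) / 2"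
  unfolding t_minus_eq using alg1[of "2^n" "(-1)^n"] by simp

lemma alg: fixes s q E A :: real assumes s: "s*s = 2" "s > 0" and q: "q > 0"
  shows "(2 + s + (-E) / (2*q) * (s - 1)) / 3 - (1/s) * A =
    (1 - E/(2*q))/3 + (1/s) * ((2 + s + E / q * (s - 1)) / 3 - A)"
proof -
  have ss: "s * (s * X) = 2 * X" for X using s by (simp add: mult.assoc[symmetric])
  show ?thesis using s q by (simp add: field_simps)
qed

lemma t_minus_Suc': "t_minus (Suc n) = (1 - (-1)^(n+1) / (2 * 2^n)) / 3"
  unfolding t_minus_eq by (simp add: field_simps)

lemma Mn_Suc: "Mn (Suc n) = t_minus (Suc n) + a * Mn n"
proof -
  have m: "(-1::real)^(Suc n + 1) = - ((-1)^(n+1))" by simp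
  have e: "Mn (Suc n) = (2 + sqrt 2 + (- ((-1)^(n+1))) / (2 * 2^n) * (sqrt 2 - 1)) / 3 - (1 / sqrt 2) * a ^ n"
    unfolding Mn_eq m by (simp add: a_def)
  have f: "Mn n = (2 + sqrt 2 + (-1)^(n+1) / 2^n * (sqrt 2 - 1)) / 3 - a ^ n"
    unfolding Mn_eq by (simp add: a_def)
  have "sqrt 2 * sqrt 2 = (2::real)" by simp
  from alg[OF this _ _, of "2^n" "(-1)^(n+1)" "a^n"]
  show ?thesis unfolding e f t_minus_Suc' by (simp add: a_def)
qed

lemma a_gt: "2 * a - 1 > 0"
proof -
  have "sqrt 2 < (2::real)" by (rule sqrt2_less_2)
  then show ?thesis unfolding a_def by (simp add: field_simps)
qed

lemma a_pos: "a > 0" unfolding a_def by simp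

lemma inv:
  assumes "n \<ge> 1"
  shows "0 \<le> t_minus n \<and> t_minus n \<le> 1/2 \<and> xhat n (t_minus n) = Mn n
    \<and> (\<forall>t\<in>{0..t_minus n}. xhat n t \<le> Mn n - (t_minus n - t))
    \<and> (\<forall>t\<in>{t_minus n..1/2}. xhat n t \<le> Mn n - (2*a-1) * (t - t_minus n))"
  using assms
proof (induction n rule: nat_induct_at_least)
  case base
  have x1: "xhat (Suc 0) t = e00 t" for t unfolding xhat_def faber_def by simp
  have t1: "t_minus (Suc 0) = 1/2" using t_minus_1 by simp
  have m1: "Mn (Suc 0) = 1/2" using Mn_1 by simp
  show ?case by (auto simp: x1 t1 m1 e00_half)
next
  case (Suc n)
  define tm where "tm = t_minus n"
  define M where "M = Mn n"
  have tm0: "0 \<le> tm" and tm1: "tm \<le> 1/2" and ytm: "xhat n tm = M"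
    and L: "\<And>t. 0 \<le> t \<Longrightarrow> t \<le> tm \<Longrightarrow> xhat n t \<le> M - (tm - t)"
    and R: "\<And>t. tm \<le> t \<Longrightarrow> t \<le> 1/2 \<Longrightarrow> xhat n t \<le> M - (2*a-1) * (t - tm)"
    using Suc.IH by (auto simp: tm_def M_def)
  have G: "xhat n t \<le> M" if "0 \<le> t" "t \<le> 1" for t
  proof -
    have g: "xhat n s \<le> M" if "0 \<le> s" "s \<le> 1/2" for s
    proof (cases "s \<le> tm")
      case True then show ?thesis using L[of s] that by simp
    next
      case False then show ?thesis using R[of s] that a_gt
        by (smt (verit) mult_nonneg_nonneg)
    qed
    show ?thesis
    proof (cases "t \<le> 1/2")
      case True then show ?thesis using g that by simp
    next
      case False then show ?thesis using g[of "1-t"] that xhat_sym[of n t] by simp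
    qed
  qed
  have tS: "t_minus (Suc n) = (1 - tm) / 2" by (simp add: t_minus_Suc tm_def)
  have MS: "Mn (Suc n) = (1 - tm) / 2 + a * M" by (simp add: Mn_Suc tS M_def)
  have v1: "xhat (Suc n) ((1 - tm)/2) = Mn (Suc n)"
  proof -
    have e: "2 * ((1 - tm) / 2) = 1 - tm" by simp
    have "xhat (Suc n) ((1 - tm)/2) = (1 - tm)/2 + a * xhat n (1 - tm)"
      using xhat_rec[of "(1-tm)/2" n] tm0 tm1 unfolding e by simp
    then show ?thesis using xhat_sym[of n tm] ytm MS by simp
  qed
  have "True"
    using tm0 tm1 xhat_rec[of "(1-tm)/2" n] xhat_sym[of n tm] ytm MS by simp
  have l1: "xhat (Suc n) u \<le> Mn (Suc n) - ((1 - tm)/2 - u)"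
    if "0 \<le> u" "u \<le> (1 - tm)/2" for u
  proof -
    have "xhat n (2*u) \<le> M" using G[of "2*u"] that tm0 by simp
    then have "a * xhat n (2*u) \<le> a * M" using a_pos by simp
    then show ?thesis using xhat_rec[of u n] that tm0 MS by simp
  qed
  have r1: "xhat (Suc n) u \<le> Mn (Suc n) - (2*a-1) * (u - (1 - tm)/2)"
    if "(1 - tm)/2 \<le> u" "u \<le> 1/2" for u
  proof -
    have "xhat n (2*u) = xhat n (1 - 2*u)" using xhat_sym[of n "2*u"] by simp
    also have "\<dots> \<le> M - (tm - (1 - 2*u))" using L[of "1-2*u"] that by simp
    finally have "a * xhat n (2*u) \<le> a * (M - (tm - (1 - 2*u)))" using a_pos by simp
    moreover have "xhat (Suc n) u = u + a * xhat n (2*u)"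
      using xhat_rec[of u n] that tm1 by simp
    moreover have "a * (M - (tm - (1 - 2*u))) = a*M - a*tm + a - 2*(a*u)"
      by (simp add: algebra_simps)
    moreover have "(2*a-1) * (u - (1 - tm)/2) = 2*(a*u) - a + a*tm - u + (1 - tm)/2"
      by (simp add: field_simps)
    ultimately show ?thesis using MS by linarith
  qed
  show ?case using tm0 tm1 v1 l1 r1 by (simp add: tS)
qed

theorem lemma3p1:
  fixes n :: nat
  assumes "n \<ge> 1"
  shows "t_minus n \<in> {0..1/2} \<and> t_plus n \<in> {1/2..1}
    \<and> {t \<in> {0..1}. \<forall>s\<in>{0..1}. xhat n s \<le> xhat n t} = {t_minus n, t_plus n}
    \<and> Sup (xhat n ` {0..1}) = Mn n
    \<and> xhat n (t_minus n) = Mn n \<and> xhat n (t_plus n) = Mn n"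
proof -
  define tm where "tm = t_minus n"
  define M where "M = Mn n"
  have tm0: "0 \<le> tm" and tm1: "tm \<le> 1/2" and ytm: "xhat n tm = M"
    and L: "\<And>t. 0 \<le> t \<Longrightarrow> t \<le> tm \<Longrightarrow> xhat n t \<le> M - (tm - t)"
    and R: "\<And>t. tm \<le> t \<Longrightarrow> t \<le> 1/2 \<Longrightarrow> xhat n t \<le> M - (2*a-1) * (t - tm)"
    using inv[OF assms] by (auto simp: tm_def M_def)
  have tp: "t_plus n = 1 - tm" by (simp add: t_plus_def tm_def)
  have ytp: "xhat n (1 - tm) = M" using xhat_sym[of n tm] ytm by simp
  have half: "t = tm" if "0 \<le> t" "t \<le> 1/2" "xhat n t \<ge> M" for t
  proof (rule ccontr)
    assume "t \<noteq> tm"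
    then consider "t < tm" | "t > tm" by linarith
    then show False
    proof cases
      case 1 then show ?thesis using L[of t] that by simp
    next
      case 2
      have "(2*a-1) * (t - tm) > 0" using a_gt 2 by simp
      then show ?thesis using R[of t] that 2 by simp
    qed
  qed
  have G: "xhat n t \<le> M" if "0 \<le> t" "t \<le> 1" for t
  proof -
    have g: "xhat n s \<le> M" if "0 \<le> s" "s \<le> 1/2" for s
    proof (cases "s \<le> tm")
      case True then show ?thesis using L[of s] that by simp
    next
      case False then show ?thesis using R[of s] that a_gt
        by (smt (verit) mult_nonneg_nonneg)
    qed
    show ?thesis
    proof (cases "t \<le> 1/2")
      case True then show ?thesis using g that by simp
    next
      case False then show ?thesis using g[of "1-t"] that xhat_sym[of n t] by simp
    qed
  qed
  have S: "{t \<in> {0..1}. \<forall>s\<in>{0..1}. xhat n s \<le> xhat n t} = {tm, 1 - tm}"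
  proof (intro set_eqI iffI)
    fix t assume "t \<in> {t \<in> {0..1}. \<forall>s\<in>{0..1}. xhat n s \<le> xhat n t}"
    then have t01: "0 \<le> t" "t \<le> 1" and mx: "xhat n tm \<le> xhat n t"
      using tm0 tm1 by auto
    then have ge: "xhat n t \<ge> M" using ytm by simp
    show "t \<in> {tm, 1 - tm}"
    proof (cases "t \<le> 1/2")
      case True then show ?thesis using half[of t] t01 ge by simp
    next
      case False then have "1 - t = tm" using half[of "1-t"] t01 ge xhat_sym[of n t] by simp
      then show ?thesis by auto
    qed
  next
    fix t assume "t \<in> {tm, 1 - tm}"
    then show "t \<in> {t \<in> {0..1}. \<forall>s\<in>{0..1}. xhat n s \<le> xhat n t}"
      using tm0 tm1 G ytm ytp by auto
  qed
  have Sup: "Sup (xhat n ` {0..1}) = M"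
  proof (rule cSup_eq_maximum)
    show "M \<in> xhat n ` {0..1}" using ytm tm0 tm1 by (auto intro!: image_eqI[of _ _ tm])
    show "\<And>x. x \<in> xhat n ` {0..1} \<Longrightarrow> x \<le> M" using G by auto
  qed
  show ?thesis using tm0 tm1 S Sup ytm ytp
    by (simp add: tp tm_def[symmetric] M_def[symmetric])
qed

end
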